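(* Let $f:\mathbb{R}^n\to\mathbb{R}$ be twice continuously differentiable with $L$-Lipschitz gradient, let $\varphi_s:\mathbb{R}^{n_s}\to\mathbb{R}$ ($s=1,\dots,p$) be twice continuously differentiable and $\mu_s$-strongly convex ($\mu_s>0$), and $\mu=\min_s\mu_s$. For step size $0<\alpha<\frac{\mu}{L}$, the map $\psi=\psi_p\circ\psi_{p-1}\circ\cdots\circ\psi_1:\mathbb{R}^n\to\mathbb{R}^n$ is a diffeomorphism.
   Context: $\|\nabla f(x)-\nabla f(y)\|\le L\|x-y\|$ for all $x,y$, $L>0$. The variable is partitioned as $x=(x(1),\dots,x(p))$, $x(s)\in\mathbb{R}^{n_s}$, $\sum_sn_s=n$; $U_s\in\mathbb{R}^{n\times n_s}$ is the $s$-th block-column of $I_n$ and $\nabla_sf(x)=U_s^T\nabla f(x)$. Strong convexity: $\varphi_s(y)\ge\varphi_s(x)+\langle\nabla\varphi_s(x),y-x\rangle+\frac{\mu_s}2\|y-x\|^2$; then $\nabla\varphi_s$ is invertible with inverse $[\nabla\varphi_s]^{-1}$. Define $\psi_s(x)=(I_n-U_sU_s^T)x+U_s[\nabla\varphi_s]^{-1}\big(\nabla\varphi_s(x(s))-\alpha\nabla_sf(x)\big)$ (one block step of block mirror descent). *)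

theory Defs
  imports "HOL-Analysis.Analysis"
begin

definition grad :: "('a::euclidean_space \<Rightarrow> real) \<Rightarrow> 'a \<Rightarrow> 'a" where
  "grad f x = (THE D. GDERIV f x :> D)"

definition C2 :: "('a::euclidean_space \<Rightarrow> real) \<Rightarrow> bool" where
  "C2 f \<longleftrightarrow> (\<exists>g H. (\<forall>x. GDERIV f x :> g x) \<and>
                    (\<forall>x. (g has_derivative blinfun_apply (H x)) (at x)) \<and>
                    continuous_on UNIV H)"

definition C1_map :: "('a::euclidean_space \<Rightarrow> 'b::euclidean_space) \<Rightarrow> bool" where
  "C1_map F \<longleftrightarrow> (\<exists>D. (\<forall>x. (F has_derivative blinfun_apply (D x)) (at x)) \<and> continuous_on UNIV D)"

definition diffeomorphism :: "('a::euclidean_space \<Rightarrow> 'a) \<Rightarrow> bool" where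
  "diffeomorphism F \<longleftrightarrow> bij F \<and> C1_map F \<and> C1_map (inv F)"

text \<open>The coordinates of real^'n are partitioned into blocks
  by blk :: 'n \<Rightarrow> nat: coordinate i belongs to block blk i.
  The block space R^{n_s} is identified with the coordinate subspace blockspace blk s
  (via U_s), and U_s U_s^T is the coordinate projection blockproj blk s.\<close>
definition blockspace :: "('n \<Rightarrow> nat) \<Rightarrow> nat \<Rightarrow> (real^'n) set" where
  "blockspace blk s = {x. \<forall>i. blk i \<noteq> s \<longrightarrow> x $ i = 0}"

definition blockproj :: "('n \<Rightarrow> nat) \<Rightarrow> nat \<Rightarrow> real^'n \<Rightarrow> real^'n" where
  "blockproj blk s x = (\<chi> i. if blk i = s then x $ i else 0)"

text \<open>One block step of block mirror descent:
  psi_s(x) = (I - U_s U_s^T) x + U_s [grad phi_s]^{-1}(grad phi_s(x(s)) - alpha grad_s f(x)).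
  Here phi s is phi_s composed with U_s^T (a function on real^'n depending only on the
  s-th block), so grad (phi s) = U_s (grad phi_s) U_s^T, and
  U_s [grad phi_s]^{-1} U_s^T is the inverse of grad (phi s) restricted to the block space.\<close>
definition bmd_step ::
  "('n \<Rightarrow> nat) \<Rightarrow> (real^'n \<Rightarrow> real) \<Rightarrow> (nat \<Rightarrow> real^'n \<Rightarrow> real) \<Rightarrow> real \<Rightarrow> nat \<Rightarrow> real^'n \<Rightarrow> real^'n" where
  "bmd_step blk f phi \<alpha> s x =
     (x - blockproj blk s x) +
     inv_into (blockspace blk s) (grad (phi s))
       (grad (phi s) (blockproj blk s x) - \<alpha> *\<^sub>R blockproj blk s (grad f x))"

text \<open>psi = psi_{p-1} o ... o psi_0 (blocks indexed 0..p-1).\<close>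
primrec bmd_comp ::
  "('n \<Rightarrow> nat) \<Rightarrow> (real^'n \<Rightarrow> real) \<Rightarrow> (nat \<Rightarrow> real^'n \<Rightarrow> real) \<Rightarrow> real \<Rightarrow> nat \<Rightarrow> real^'n \<Rightarrow> real^'n" where
  "bmd_comp blk f phi \<alpha> 0 = id"
| "bmd_comp blk f phi \<alpha> (Suc k) = bmd_step blk f phi \<alpha> k \<circ> bmd_comp blk f phi \<alpha> k"

end

theory Submission
  imports Defs
begin

lemma deriv_mono_bound:
  fixes F :: "'a::euclidean_space \<Rightarrow> 'a"
  assumes der: "(F has_derivative A) (at x)"
    and mono: "\<And>y. (F y - F x) \<bullet> (y - x) \<ge> c * (norm (y - x))\<^sup>2"
  shows "A h \<bullet> h \<ge> c * (norm h)\<^sup>2"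
proof -
  have bl: "bounded_linear A" using der by (rule has_derivative_bounded_linear)
  have d1: "((\<lambda>t::real. x + t *\<^sub>R h) has_derivative (\<lambda>t. t *\<^sub>R h)) (at 0)"
    by (auto intro!: derivative_eq_intros)
  have der0: "(F has_derivative A) (at ((\<lambda>t::real. x + t *\<^sub>R h) 0))" using der by simp
  have d2: "((\<lambda>t::real. F (x + t *\<^sub>R h)) has_derivative (\<lambda>t. A (t *\<^sub>R h))) (at 0)"
    using diff_chain_at[OF d1 der0] by (simp add: o_def)
  have d3: "((\<lambda>t::real. F (x + t *\<^sub>R h) \<bullet> h) has_derivative (\<lambda>t. A (t *\<^sub>R h) \<bullet> h)) (at 0)"
    by (rule has_derivative_inner_left[OF d2])
  have eqf: "(\<lambda>t. A (t *\<^sub>R h) \<bullet> h) = (\<lambda>t. (A h \<bullet> h) * t)"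
    using linear_scale[OF bounded_linear.linear[OF bl]] by (auto simp: mult.commute)
  have "((\<lambda>t::real. F (x + t *\<^sub>R h) \<bullet> h) has_field_derivative (A h \<bullet> h)) (at 0)"
    using d3 unfolding has_field_derivative_def eqf by simp
  then have "((\<lambda>t::real. F (x + t *\<^sub>R h) \<bullet> h) has_field_derivative (A h \<bullet> h)) (at 0 within {0<..})"
    by (rule has_field_derivative_at_within)
  then have lim: "((\<lambda>t. (F (x + t *\<^sub>R h) \<bullet> h - F (x + 0 *\<^sub>R h) \<bullet> h) / (t - 0)) \<longlongrightarrow> (A h \<bullet> h)) (at_right 0)"
    unfolding has_field_derivative_iff .
  have ev: "\<forall>\<^sub>F t in at_right 0. c * (norm h)\<^sup>2 \<le> (F (x + t *\<^sub>R h) \<bullet> h - F (x + 0 *\<^sub>R h) \<bullet> h) / (t - 0)"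
  proof (rule eventually_at_rightI[of 0 1])
    fix t :: real assume t: "t \<in> {0<..<1}"
    have m: "(F (x + t *\<^sub>R h) - F x) \<bullet> (t *\<^sub>R h) \<ge> c * (norm (t *\<^sub>R h))\<^sup>2"
      using mono[of "x + t *\<^sub>R h"] by simp
    have "t * (t * (c * (norm h)\<^sup>2)) \<le> t * ((F (x + t *\<^sub>R h) - F x) \<bullet> h)"
      using m t by (simp add: power2_eq_square algebra_simps)
    then have "t * (c * (norm h)\<^sup>2) \<le> (F (x + t *\<^sub>R h) - F x) \<bullet> h" using t by simp
    then show "c * (norm h)\<^sup>2 \<le> (F (x + t *\<^sub>R h) \<bullet> h - F (x + 0 *\<^sub>R h) \<bullet> h) / (t - 0)"
      using t by (simp add: inner_diff_left pos_le_divide_eq mult.commute)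
  qed simp
  show ?thesis
    by (rule tendsto_lowerbound[OF lim ev trivial_limit_at_right_real])
qed
lemma strong_mono_diffeo:
  fixes F :: "'a::euclidean_space \<Rightarrow> 'a" and D :: "'a \<Rightarrow> 'a \<Rightarrow>\<^sub>L 'a"
  assumes derF: "\<And>x. (F has_derivative blinfun_apply (D x)) (at x)"
    and contD: "continuous_on UNIV D"
    and c: "c > 0"
    and mono: "\<And>x y. (F x - F y) \<bullet> (x - y) \<ge> c * (norm (x - y))\<^sup>2"
  shows "diffeomorphism F"
proof -
  have lip: "c * norm (x - y) \<le> norm (F x - F y)" for x y
  proof (cases "x = y")
    case True then show ?thesis by simp
  next
    case False
    have "c * (norm (x - y))\<^sup>2 \<le> norm (F x - F y) * norm (x - y)"
      using mono[of x y] norm_cauchy_schwarz[of "F x - F y" "x - y"] by linarith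
    then show ?thesis using False by (simp add: power2_eq_square)
  qed
  have injF: "inj F"
  proof (rule injI)
    fix x y assume "F x = F y"
    then have "c * norm (x - y) \<le> 0" using lip[of x y] by simp
    then show "x = y" using c by (simp add: mult_le_0_iff)
  qed
  have Dmono: "c * (norm h)\<^sup>2 \<le> D x h \<bullet> h" for x h
    by (rule deriv_mono_bound[OF derF]) (use mono in auto)
  have Dlow: "c * norm h \<le> norm (D x h)" for x h
  proof (cases "h = 0")
    case True then show ?thesis by simp
  next
    case False
    have "c * (norm h)\<^sup>2 \<le> norm (D x h) * norm h"
      using Dmono[of h x] norm_cauchy_schwarz[of "D x h" h] by linarith
    then show ?thesis using False by (simp add: power2_eq_square)
  qed
  have lin: "linear (blinfun_apply (D x))" for x
    by (simp add: blinfun.bounded_linear_right bounded_linear.linear)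
  have Dinj: "inj (blinfun_apply (D x))" for x
  proof (rule injI)
    fix a b assume "D x a = D x b"
    then have "D x (a - b) = 0" by (simp add: blinfun.diff_right)
    then have "c * norm (a - b) \<le> 0" using Dlow[of "a - b" x] by simp
    then show "a = b" using c by (simp add: mult_le_0_iff)
  qed
  have Dsurj: "surj (blinfun_apply (D x))" for x
    by (rule eucl.linear_injective_imp_surjective[OF lin Dinj]) simp
  define Di where "Di x = Blinfun (inv (blinfun_apply (D x)))" for x
  have Di_bl: "bounded_linear (inv (blinfun_apply (D x)))" for x
    using eucl.inj_linear_imp_inv_linear[OF lin Dinj] linear_conv_bounded_linear by blast
  have Di_apply: "blinfun_apply (Di x) = inv (blinfun_apply (D x))" for x
    unfolding Di_def using Di_bl bounded_linear_Blinfun_apply by blast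
  have DDi: "D x (Di x k) = k" for x k
    using Dsurj[of x] by (simp add: Di_apply surj_f_inv_f)
  have DiD: "Di x (D x k) = k" for x k
    using Dinj[of x] by (simp add: Di_apply inv_f_f)
  have Di_norm: "norm (Di x k) \<le> norm k / c" for x k
    using Dlow[of "Di x k" x] c by (simp add: DDi pos_le_divide_eq mult.commute)
  have openR: "open (range F)"
  proof (subst open_subopen, intro ballI)
    fix y assume "y \<in> range F"
    then obtain x0 where y: "y = F x0" by blast
    have inv0: "Di x0 o\<^sub>L D x0 = id_blinfun"
      by (rule blinfun_eqI) (simp add: DiD)
    obtain U' V g g' where "open U'" "U' \<subseteq> UNIV" "x0 \<in> U'" "open V" "F x0 \<in> V"
        "homeomorphism U' V F g"
      by (rule inverse_function_theorem[OF open_UNIV derF contD UNIV_I inv0]) blast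
    then have "V \<subseteq> range F" unfolding homeomorphism_def by blast
    then show "\<exists>T. open T \<and> y \<in> T \<and> T \<subseteq> range F"
      using \<open>open V\<close> \<open>F x0 \<in> V\<close> y by blast
  qed
  have contF: "continuous_on UNIV F"
    using derF has_derivative_continuous continuous_at_imp_continuous_on by blast
  have closedR: "closed (range F)"
    unfolding closed_sequential_limits
  proof (intro allI impI, elim conjE)
    fix xs l assume xs: "\<forall>n. xs n \<in> range F" and lim: "xs \<longlonglongrightarrow> l"
    have "\<forall>n. \<exists>w. xs n = F w" using xs by blast
    then obtain z where z: "\<And>n. xs n = F (z n)" by metis
    have "Cauchy xs" using lim by (rule LIMSEQ_imp_Cauchy)
    have "Cauchy z"
      unfolding Cauchy_def
    proof (intro allI impI)
      fix e :: real assume e: "e > 0"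
      obtain M where M: "\<forall>m\<ge>M. \<forall>n\<ge>M. dist (xs m) (xs n) < e * c"
        using \<open>Cauchy xs\<close> e c unfolding Cauchy_def by (meson mult_pos_pos)
      show "\<exists>M. \<forall>m\<ge>M. \<forall>n\<ge>M. dist (z m) (z n) < e"
      proof (intro exI allI impI)
        fix m n assume "m \<ge> M" "n \<ge> M"
        then have "dist (xs m) (xs n) < e * c" using M by blast
        then have "c * dist (z m) (z n) < e * c"
          using lip[of "z m" "z n"] z by (simp add: dist_norm)
        then show "dist (z m) (z n) < e" using c by (simp add: mult.commute)
      qed
    qed
    then obtain zl where zl: "z \<longlonglongrightarrow> zl" using Cauchy_convergent_iff convergent_def by blast
    have "(\<lambda>n. F (z n)) \<longlonglongrightarrow> F zl"
      by (rule continuous_on_tendsto_compose[OF contF zl]) auto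
    moreover have "xs = (\<lambda>n. F (z n))" using z by auto
    ultimately have "xs \<longlonglongrightarrow> F zl" by simp
    then have "l = F zl" using lim LIMSEQ_unique by blast
    then show "l \<in> range F" by blast
  qed
  have surjF: "surj F"
    using clopen[of "range F"] openR closedR by blast
  define g where "g = inv F"
  have Fg: "F (g y) = y" for y unfolding g_def using surjF by (simp add: surj_f_inv_f)
  have gF: "g (F x) = x" for x unfolding g_def using injF by (simp add: inv_f_f)
  have glip: "c * norm (g y - g y') \<le> norm (y - y')" for y y'
    using lip[of "g y" "g y'"] by (simp add: Fg)
  have contg: "continuous_on UNIV g"
    unfolding continuous_on_iff
  proof (intro ballI allI impI)
    fix y e assume "(e::real) > 0"
    show "\<exists>d>0. \<forall>y'\<in>UNIV. dist y' y < d \<longrightarrow> dist (g y') (g y) < e"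
    proof (intro exI conjI ballI impI)
      show "e * c > 0" using \<open>e > 0\<close> c by simp
      fix y' assume "dist y' y < e * c"
      then have "c * dist (g y') (g y) < e * c" using glip[of y' y] by (simp add: dist_norm)
      then show "dist (g y') (g y) < e" using c by (simp add: mult.commute)
    qed
  qed
  have derg: "(g has_derivative blinfun_apply (Di (g y))) (at y)" for y
  proof (rule has_derivative_inverse_basic[OF derF, where T=UNIV])
    show "bounded_linear (blinfun_apply (Di (g y)))" by (rule blinfun.bounded_linear_right)
    show "blinfun_apply (Di (g y)) \<circ> blinfun_apply (D (g y)) = id"
      by (rule ext) (simp add: DiD)
    show "isCont g y" using contg by (simp add: continuous_on_eq_continuous_at)
  qed (auto simp: Fg)
  have Di_lip: "norm (Di a - Di b) \<le> norm (D a - D b) / c\<^sup>2" for a b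
  proof (rule norm_blinfun_bound)
    show "0 \<le> norm (D a - D b) / c\<^sup>2" by simp
    fix k
    define w where "w = Di b k"
    have eq: "(Di a - Di b) k = Di a (D b w - D a w)"
      by (simp add: w_def blinfun.diff_right DDi DiD blinfun.diff_left)
    have "norm (Di a (D b w - D a w)) \<le> norm (D b w - D a w) / c" by (rule Di_norm)
    also have "norm (D b w - D a w) = norm ((D b - D a) w)" by (simp add: blinfun.diff_left)
    also have "\<dots> \<le> norm (D b - D a) * norm w" by (rule norm_blinfun)
    also have "norm w \<le> norm k / c" unfolding w_def by (rule Di_norm)
    finally have "norm ((Di a - Di b) k) \<le> norm (D b - D a) * (norm k / c) / c"
      using eq c by (simp add: divide_right_mono mult_left_mono order_trans)
    then show "norm ((Di a - Di b) k) \<le> norm (D a - D b) / c\<^sup>2 * norm k"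
      by (simp add: norm_minus_commute power2_eq_square)
  qed
  have contDg: "continuous_on UNIV (D \<circ> g)"
    by (rule continuous_on_compose[OF contg]) (rule continuous_on_subset[OF contD], simp)
  have contDig: "continuous_on UNIV (\<lambda>y. Di (g y))"
    unfolding continuous_on_iff
  proof (intro ballI allI impI)
    fix y e assume "(e::real) > 0"
    then have "e * c\<^sup>2 > 0" using c by simp
    then obtain d where d: "d > 0" "\<forall>y'\<in>UNIV. dist y' y < d \<longrightarrow> dist ((D \<circ> g) y') ((D \<circ> g) y) < e * c\<^sup>2"
      using contDg unfolding continuous_on_iff by blast
    show "\<exists>d>0. \<forall>y'\<in>UNIV. dist y' y < d \<longrightarrow> dist (Di (g y')) (Di (g y)) < e"
    proof (intro exI conjI ballI impI)
      show "d > 0" by fact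
      fix y' assume "dist y' y < d"
      then have "norm (D (g y') - D (g y)) < e * c\<^sup>2" using d by (simp add: dist_norm)
      moreover have "norm (Di (g y') - Di (g y)) \<le> norm (D (g y') - D (g y)) / c\<^sup>2" by (rule Di_lip)
      moreover have "norm (D (g y') - D (g y)) / c\<^sup>2 < e"
        using calculation(1) c by (simp add: pos_divide_less_eq)
      ultimately show "dist (Di (g y')) (Di (g y)) < e"
        by (simp add: dist_norm)
    qed
  qed
  show ?thesis
    unfolding diffeomorphism_def C1_map_def
  proof (intro conjI)
    show "bij F" using injF surjF by (simp add: bij_def)
    show "\<exists>D. (\<forall>x. (F has_derivative blinfun_apply (D x)) (at x)) \<and> continuous_on UNIV D"
      using derF contD by blast
    show "\<exists>D. (\<forall>x. (inv F has_derivative blinfun_apply (D x)) (at x)) \<and> continuous_on UNIV D"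
      by (rule exI[where x="\<lambda>y. Di (g y)"]) (use derg contDig in \<open>simp add: g_def\<close>)
  qed
qed
lemma id_hd: "(id has_derivative (\<lambda>x. x)) F"
  unfolding id_def by (rule has_derivative_ident)

lemma diffeo_id: "diffeomorphism (id :: 'a::euclidean_space \<Rightarrow> 'a)"
  unfolding diffeomorphism_def C1_map_def
  by (auto intro!: exI[where x="\<lambda>_. id_blinfun"] simp: inv_id id_blinfun.rep_eq id_hd)

lemma C1_comp:
  assumes "C1_map (F :: 'a::euclidean_space \<Rightarrow> 'b::euclidean_space)" "C1_map (G :: 'c::euclidean_space \<Rightarrow> 'a)"
  shows "C1_map (F \<circ> G)"
proof -
  obtain DF where DF: "\<And>x. (F has_derivative blinfun_apply (DF x)) (at x)" "continuous_on UNIV DF"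
    using assms(1) unfolding C1_map_def by blast
  obtain DG where DG: "\<And>x. (G has_derivative blinfun_apply (DG x)) (at x)" "continuous_on UNIV DG"
    using assms(2) unfolding C1_map_def by blast
  have contG: "continuous_on UNIV G"
    using DG(1) has_derivative_continuous continuous_at_imp_continuous_on by blast
  have der: "(F \<circ> G has_derivative blinfun_apply (DF (G x) o\<^sub>L DG x)) (at x)" for x
    using diff_chain_at[OF DG(1) DF(1)] by (simp add: blinfun_compose.rep_eq)
  have cont: "continuous_on UNIV (\<lambda>x. DF (G x) o\<^sub>L DG x)"
  proof (intro continuous_intros DG(2))
    show "continuous_on UNIV (\<lambda>x. DF (G x))"
      using continuous_on_compose[OF contG continuous_on_subset[OF DF(2)]] by (simp add: o_def)
  qed
  show ?thesis unfolding C1_map_def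
    by (rule exI[where x="\<lambda>x. DF (G x) o\<^sub>L DG x"]) (use der cont in blast)
qed

lemma diffeo_comp:
  assumes "diffeomorphism (F :: 'a::euclidean_space \<Rightarrow> 'a)" "diffeomorphism G"
  shows "diffeomorphism (F \<circ> G)"
  using assms unfolding diffeomorphism_def
  by (simp add: bij_comp C1_comp o_inv_distrib)

lemma diffeo_inv:
  assumes "diffeomorphism (F :: 'a::euclidean_space \<Rightarrow> 'a)"
  shows "diffeomorphism (inv F)"
  using assms unfolding diffeomorphism_def
  by (simp add: bij_imp_bij_inv inv_inv_eq)

lemma grad_eq:
  fixes f :: "'a::euclidean_space \<Rightarrow> real"
  assumes "GDERIV f x :> d"
  shows "grad f x = d"
  unfolding grad_def
proof (rule the_equality)
  show "GDERIV f x :> d" by (rule assms)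
next
  fix D assume "GDERIV f x :> D"
  then have "(\<lambda>h. h \<bullet> D) = (\<lambda>h. h \<bullet> d)"
    using assms unfolding gderiv_def by (rule has_derivative_unique)
  then have "(D - d) \<bullet> D = (D - d) \<bullet> d" by meson
  then have "(D - d) \<bullet> (D - d) = 0" by (simp add: inner_diff_right)
  then show "D = d" by simp
qed

lemma C2_grad:
  fixes f :: "'a::euclidean_space \<Rightarrow> real"
  assumes "C2 f"
  obtains H where "\<And>x. GDERIV f x :> grad f x"
    "\<And>x. (grad f has_derivative blinfun_apply (H x)) (at x)" "continuous_on UNIV H"
proof -
  obtain g H where g: "\<And>x. GDERIV f x :> g x" "\<And>x. (g has_derivative blinfun_apply (H x)) (at x)"
    "continuous_on UNIV H"
    using assms unfolding C2_def by blast
  have "grad f = g" using grad_eq[OF g(1)] by auto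
  then show ?thesis using that g by auto
qed
lemma bp_in: "blockproj blk s x \<in> blockspace blk s"
  by (simp add: blockproj_def blockspace_def)

lemma bp_id: "x \<in> blockspace blk s \<Longrightarrow> blockproj blk s x = x"
  by (simp add: blockproj_def blockspace_def vec_eq_iff)

lemma bp_bl: "bounded_linear (blockproj blk s :: real^'n \<Rightarrow> real^'n)"
proof -
  have "linear (blockproj blk s :: real^'n \<Rightarrow> real^'n)"
    by (rule linearI) (auto simp: blockproj_def vec_eq_iff)
  then show ?thesis using linear_conv_bounded_linear by blast
qed

lemma bp_diff: "blockproj blk s (x - y) = blockproj blk s x - blockproj blk s (y :: real^'n)"
  by (simp add: blockproj_def vec_eq_iff)

lemma bp_proj_diff: "blockproj blk s (x - blockproj blk s x) = 0"
  by (simp add: blockproj_def vec_eq_iff)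

lemma bp_inner: "b \<in> blockspace blk s \<Longrightarrow> b \<bullet> d = b \<bullet> blockproj blk s (d :: real^'n)"
  unfolding inner_vec_def blockspace_def blockproj_def
  by (rule sum.cong) auto

lemma bp_orth: "blockproj blk s d \<bullet> (d - blockproj blk s (d :: real^'n)) = 0"
  unfolding inner_vec_def blockproj_def by (rule sum.neutral) auto

lemma bp_norm: "(norm d)\<^sup>2 = (norm (blockproj blk s d))\<^sup>2 + (norm (d - blockproj blk s (d :: real^'n)))\<^sup>2"
proof -
  have "orthogonal (blockproj blk s d) (d - blockproj blk s d)"
    using bp_orth[of blk s d] by (simp add: orthogonal_def)
  from norm_add_Pythagorean[OF this] show ?thesis by simp
qed

lemma bp_norm_le: "norm (blockproj blk s (d :: real^'n)) \<le> norm d"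
proof -
  have "(norm (blockproj blk s d))\<^sup>2 \<le> (norm d)\<^sup>2" using bp_norm[of d blk s] by simp
  then show ?thesis by (rule power2_le_imp_le) simp
qed

lemma bs_diff: "a \<in> blockspace blk s \<Longrightarrow> b \<in> blockspace blk s \<Longrightarrow> a - b \<in> blockspace blk s"
  by (simp add: blockspace_def)

lemma bs_scale: "a \<in> blockspace blk s \<Longrightarrow> r *\<^sub>R a \<in> blockspace blk s"
  by (simp add: blockspace_def)

lemma grad_block:
  fixes phi :: "real^'n \<Rightarrow> real"
  assumes pb: "\<forall>x. phi x = phi (blockproj blk s x)" and gd: "\<And>x. GDERIV phi x :> grad phi x"
  shows "grad phi y \<in> blockspace blk s"
  unfolding blockspace_def
proof (intro CollectI allI impI)
  fix i assume i: "blk i \<noteq> s"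
  define e :: "real^'n" where "e = axis i 1"
  have Pe: "blockproj blk s (y + t *\<^sub>R e) = blockproj blk s y" for t
    using i by (auto simp: blockproj_def e_def vec_eq_iff axis_def)
  have const: "(\<lambda>t::real. phi (y + t *\<^sub>R e)) = (\<lambda>t. phi y)"
  proof
    fix t :: real
    show "phi (y + t *\<^sub>R e) = phi y" using pb Pe[of t] by metis
  qed
  have d1: "((\<lambda>t::real. y + t *\<^sub>R e) has_derivative (\<lambda>t. t *\<^sub>R e)) (at 0)"
    by (auto intro!: derivative_eq_intros)
  have der0: "(phi has_derivative (\<lambda>h. h \<bullet> grad phi y)) (at ((\<lambda>t::real. y + t *\<^sub>R e) 0))"
    using gd[of y] unfolding gderiv_def by simp
  have d2: "((\<lambda>t::real. phi (y + t *\<^sub>R e)) has_derivative (\<lambda>t. (t *\<^sub>R e) \<bullet> grad phi y)) (at 0)"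
    using diff_chain_at[OF d1 der0] by (simp add: o_def)
  then have d3: "((\<lambda>t::real. phi y) has_derivative (\<lambda>t. (t *\<^sub>R e) \<bullet> grad phi y)) (at 0)"
    by (simp add: const)
  have "(\<lambda>t::real. (t *\<^sub>R e) \<bullet> grad phi y) = (\<lambda>t. 0)"
    using has_derivative_unique[OF d3 has_derivative_const] .
  then have "(1 *\<^sub>R e) \<bullet> grad phi y = 0" by meson
  then show "grad phi y $ i = 0" unfolding e_def scaleR_one inner_axis' by simp
qed
lemma block_diffeo:
  fixes f phi :: "real^'n \<Rightarrow> real" and blk :: "'n \<Rightarrow> nat"
  assumes f_C2: "C2 f"
    and f_lip: "\<forall>x y. norm (grad f x - grad f y) \<le> L * norm (x - y)"
    and pb: "\<forall>x. phi x = phi (blockproj blk s x)"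
    and phi_C2: "C2 phi"
    and sc: "\<forall>x\<in>blockspace blk s. \<forall>y\<in>blockspace blk s.
               phi y \<ge> phi x + grad phi x \<bullet> (y - x) + \<mu> / 2 * (norm (y - x))\<^sup>2"
    and a0: "0 \<le> a" and aL: "a * L < \<mu>"
  shows "diffeomorphism (\<lambda>x. \<mu> *\<^sub>R (x - blockproj blk s x) + grad phi (blockproj blk s x)
                              - a *\<^sub>R blockproj blk s (grad f x))"
proof -
  define P where "P = blockproj blk s"
  define B where "B = blockspace blk s"
  define G where "G = grad phi"
  obtain H where gdG: "\<And>x. GDERIV phi x :> G x"
    and dG: "\<And>x. (G has_derivative blinfun_apply (H x)) (at x)" and cH: "continuous_on UNIV H"
    using C2_grad[OF phi_C2] unfolding G_def by metis
  obtain Hf where dF: "\<And>x. (grad f has_derivative blinfun_apply (Hf x)) (at x)"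
    and cHf: "continuous_on UNIV Hf"
    using C2_grad[OF f_C2] by metis
  have blP: "bounded_linear P" unfolding P_def by (rule bp_bl)
  define Pb where "Pb = Blinfun P"
  have Pb: "blinfun_apply Pb = P" unfolding Pb_def using blP bounded_linear_Blinfun_apply by blast
  have GB: "G y \<in> B" for y
    unfolding G_def B_def using grad_block[OF pb] gdG[unfolded G_def] by blast
  have smon: "(G v - G u) \<bullet> (v - u) \<ge> \<mu> * (norm (v - u))\<^sup>2" if "u \<in> B" "v \<in> B" for u v
  proof -
    have 1: "phi v \<ge> phi u + G u \<bullet> (v - u) + \<mu>/2 * (norm (v - u))\<^sup>2"
      using sc that unfolding B_def G_def by blast
    have 2: "phi u \<ge> phi v + G v \<bullet> (u - v) + \<mu>/2 * (norm (u - v))\<^sup>2"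
      using sc that unfolding B_def G_def by blast
    have 3: "norm (u - v) = norm (v - u)" by (rule norm_minus_commute)
    have 4: "G v \<bullet> (u - v) = - (G v \<bullet> (v - u))"
      by (metis inner_minus_right minus_diff_eq)
    have 5: "(G v - G u) \<bullet> (v - u) = G v \<bullet> (v - u) - G u \<bullet> (v - u)"
      by (simp add: inner_diff_left)
    have 6: "\<mu>/2 * (norm (v - u))\<^sup>2 = (\<mu> * (norm (v - u))\<^sup>2) / 2" by simp
    show ?thesis using 1 2 4 5 6 unfolding 3 by linarith
  qed
  define \<Theta> where "\<Theta> x = \<mu> *\<^sub>R (x - P x) + G (P x) - a *\<^sub>R P (grad f x)" for x
  define D where "D x = \<mu> *\<^sub>R (id_blinfun - Pb) + (H (P x) o\<^sub>L Pb) - a *\<^sub>R (Pb o\<^sub>L Hf x)" for x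
  have dP: "(P has_derivative P) (at y)" for y using blP by (rule bounded_linear_imp_has_derivative)
  have derT: "(\<Theta> has_derivative blinfun_apply (D x)) (at x)" for x
  proof -
    have d1: "((\<lambda>x. \<mu> *\<^sub>R (x - P x)) has_derivative (\<lambda>h. \<mu> *\<^sub>R (h - P h))) (at x)"
      by (intro has_derivative_scaleR_right has_derivative_diff has_derivative_ident dP)
    have d2: "((\<lambda>x. G (P x)) has_derivative (\<lambda>h. H (P x) (P h))) (at x)"
      using diff_chain_at[OF dP dG] by (simp add: o_def)
    have d3: "((\<lambda>x. a *\<^sub>R P (grad f x)) has_derivative (\<lambda>h. a *\<^sub>R P (Hf x h))) (at x)"
      using has_derivative_scaleR_right[OF diff_chain_at[OF dF dP]] by (simp add: o_def)
    have "(\<Theta> has_derivative (\<lambda>h. \<mu> *\<^sub>R (h - P h) + H (P x) (P h) - a *\<^sub>R P (Hf x h))) (at x)"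
      unfolding \<Theta>_def by (intro has_derivative_diff has_derivative_add d1 d2 d3)
    moreover have "blinfun_apply (D x) = (\<lambda>h. \<mu> *\<^sub>R (h - P h) + H (P x) (P h) - a *\<^sub>R P (Hf x h))"
      by (rule ext) (simp add: D_def Pb blinfun.add_left blinfun.diff_left blinfun.scaleR_left)
    ultimately show ?thesis by simp
  qed
  have cHP: "continuous_on UNIV (\<lambda>x. H (P x))"
    using continuous_on_compose[OF linear_continuous_on[OF blP] continuous_on_subset[OF cH]]
    by (simp add: o_def)
  have contD: "continuous_on UNIV D"
    unfolding D_def by (intro continuous_intros cHP cHf)
  have mono: "(\<Theta> x - \<Theta> y) \<bullet> (x - y) \<ge> (\<mu> - a * L) * (norm (x - y))\<^sup>2" for x y
  proof -
    define d where "d = x - y"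
    have Pd: "P x - P y = P d" unfolding d_def P_def by (simp add: bp_diff)
    have "\<mu> *\<^sub>R (x - P x) - \<mu> *\<^sub>R (y - P y) = \<mu> *\<^sub>R (d - P d)"
      using Pd by (simp add: d_def algebra_simps)
    moreover have "(d - P d) \<bullet> d = (norm (d - P d))\<^sup>2"
    proof -
      have "(d - P d) \<bullet> d = (d - P d) \<bullet> (d - P d) + (d - P d) \<bullet> P d"
        by (simp add: inner_diff_right)
      also have "(d - P d) \<bullet> P d = 0" using bp_orth[of blk s d] by (simp add: P_def inner_commute)
      finally show ?thesis by (simp add: power2_norm_eq_inner)
    qed
    ultimately have t1: "(\<mu> *\<^sub>R (x - P x) - \<mu> *\<^sub>R (y - P y)) \<bullet> d = \<mu> * (norm (d - P d))\<^sup>2"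
      by simp
    have "(G (P x) - G (P y)) \<bullet> d = (G (P x) - G (P y)) \<bullet> P d"
      unfolding P_def by (rule bp_inner) (intro bs_diff GB[unfolded B_def])
    also have "\<dots> \<ge> \<mu> * (norm (P d))\<^sup>2"
      using smon[of "P y" "P x"] Pd bp_in unfolding P_def B_def by metis
    finally have t2: "(G (P x) - G (P y)) \<bullet> d \<ge> \<mu> * (norm (P d))\<^sup>2" .
    have "(a *\<^sub>R P (grad f x) - a *\<^sub>R P (grad f y)) \<bullet> d = a * (P (grad f x - grad f y) \<bullet> d)"
      by (simp add: P_def bp_diff algebra_simps inner_diff_left)
    also have "\<dots> \<le> a * (norm (P (grad f x - grad f y)) * norm d)"
      using a0 by (intro mult_left_mono norm_cauchy_schwarz)
    also have "\<dots> \<le> a * (norm (grad f x - grad f y) * norm d)"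
      using a0 by (intro mult_left_mono mult_right_mono) (auto simp: P_def bp_norm_le)
    also have "\<dots> \<le> a * (L * norm d * norm d)"
      using a0 f_lip by (intro mult_left_mono mult_right_mono) (auto simp: d_def)
    finally have t3: "(a *\<^sub>R P (grad f x) - a *\<^sub>R P (grad f y)) \<bullet> d \<le> a * L * (norm d)\<^sup>2"
      by (simp add: power2_eq_square mult.assoc)
    have nd: "(norm d)\<^sup>2 = (norm (P d))\<^sup>2 + (norm (d - P d))\<^sup>2"
      unfolding P_def by (rule bp_norm)
    have "\<Theta> x - \<Theta> y = (\<mu> *\<^sub>R (x - P x) - \<mu> *\<^sub>R (y - P y)) + (G (P x) - G (P y))
                       - (a *\<^sub>R P (grad f x) - a *\<^sub>R P (grad f y))"
      by (simp add: \<Theta>_def algebra_simps)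
    then have "(\<Theta> x - \<Theta> y) \<bullet> d = (\<mu> *\<^sub>R (x - P x) - \<mu> *\<^sub>R (y - P y)) \<bullet> d + (G (P x) - G (P y)) \<bullet> d
                       - (a *\<^sub>R P (grad f x) - a *\<^sub>R P (grad f y)) \<bullet> d"
      by (simp only: inner_add_left inner_diff_left)
    then have "(\<Theta> x - \<Theta> y) \<bullet> d \<ge> \<mu> * ((norm (P d))\<^sup>2 + (norm (d - P d))\<^sup>2) - a * L * (norm d)\<^sup>2"
      using t1 t2 t3 by (simp add: algebra_simps)
    then show ?thesis using nd by (simp add: d_def algebra_simps)
  qed
  have "diffeomorphism \<Theta>"
    by (rule strong_mono_diffeo[OF derT contD _ mono]) (use aL in simp)
  then show ?thesis unfolding \<Theta>_def P_def G_def .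
qed
lemma step_diffeo:
  fixes f :: "real^'n \<Rightarrow> real" and phi :: "nat \<Rightarrow> real^'n \<Rightarrow> real" and blk :: "'n \<Rightarrow> nat"
  assumes f_C2: "C2 f"
    and f_lip: "\<forall>x y. norm (grad f x - grad f y) \<le> L * norm (x - y)"
    and pb: "\<forall>x. phi s x = phi s (blockproj blk s x)"
    and phi_C2: "C2 (phi s)"
    and mu: "\<mu> > 0"
    and sc: "\<forall>x\<in>blockspace blk s. \<forall>y\<in>blockspace blk s.
               phi s y \<ge> phi s x + grad (phi s) x \<bullet> (y - x) + \<mu> / 2 * (norm (y - x))\<^sup>2"
    and a0: "0 < \<alpha>" and aL: "\<alpha> * L < \<mu>"
  shows "diffeomorphism (bmd_step blk f phi \<alpha> s)"
proof -
  define P where "P = blockproj blk s"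
  define B where "B = blockspace blk s"
  define G where "G = grad (phi s)"
  define \<Phi> where "\<Phi> x = \<mu> *\<^sub>R (x - P x) + G (P x)" for x
  have dPhi: "diffeomorphism \<Phi>"
    using block_diffeo[OF f_C2 f_lip pb phi_C2 sc, of 0] mu
    unfolding \<Phi>_def P_def G_def by simp
  have dTheta: "diffeomorphism (\<lambda>x. \<Phi> x - \<alpha> *\<^sub>R P (grad f x))"
    using block_diffeo[OF f_C2 f_lip pb phi_C2 sc, of \<alpha>] a0 aL
    unfolding \<Phi>_def P_def G_def by simp
  have bijPhi: "bij \<Phi>" using dPhi unfolding diffeomorphism_def by blast
  obtain H where gdG: "\<And>x. GDERIV (phi s) x :> G x"
    using C2_grad[OF phi_C2] unfolding G_def by metis
  have GB: "G y \<in> B" for y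
    unfolding G_def B_def using grad_block[OF pb] gdG[unfolded G_def] by blast
  have linP: "linear P" unfolding P_def by (rule bounded_linear.linear[OF bp_bl])
  have PPd: "P (x - P x) = 0" for x unfolding P_def by (rule bp_proj_diff)
  have Pid: "y \<in> B \<Longrightarrow> P y = y" for y unfolding P_def B_def by (rule bp_id)
  have PB: "P y \<in> B" for y unfolding P_def B_def by (rule bp_in)
  have PPhi: "P (\<Phi> x) = G (P x)" for x
    unfolding \<Phi>_def by (simp add: linear_add[OF linP] linear_scale[OF linP] PPd Pid GB)
  have onto: "z \<in> G ` B" if "z \<in> B" for z
  proof -
    obtain x where x: "\<Phi> x = z" using bijPhi by (metis bij_pointE)
    have "G (P x) = z" using PPhi[of x] x Pid[OF that] by simp
    then show ?thesis using PB by blast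
  qed
  define \<psi> where "\<psi> x = (x - P x) + inv_into B G (G (P x) - \<alpha> *\<^sub>R P (grad f x))" for x
  have key: "\<Phi> (\<psi> x) = \<Phi> x - \<alpha> *\<^sub>R P (grad f x)" for x
  proof -
    define z where "z = G (P x) - \<alpha> *\<^sub>R P (grad f x)"
    have zB: "z \<in> B" unfolding z_def B_def
      by (intro bs_diff bs_scale GB[unfolded B_def] PB[unfolded B_def])
    define u where "u = inv_into B G z"
    have uB: "u \<in> B" unfolding u_def using onto[OF zB] by (rule inv_into_into)
    have Gu: "G u = z" unfolding u_def using onto[OF zB] by (rule f_inv_into_f)
    have psi: "\<psi> x = (x - P x) + u" unfolding \<psi>_def u_def z_def by simp
    have Ppsi: "P (\<psi> x) = u" unfolding psi by (simp add: linear_add[OF linP] PPd Pid uB)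
    have "\<Phi> (\<psi> x) = \<mu> *\<^sub>R (x - P x) + G u"
      unfolding \<Phi>_def Ppsi by (simp add: psi)
    then show ?thesis by (simp add: Gu z_def \<Phi>_def)
  qed
  have injPhi: "inj \<Phi>" using bijPhi bij_is_inj by blast
  have eq: "bmd_step blk f phi \<alpha> s = inv \<Phi> \<circ> (\<lambda>x. \<Phi> x - \<alpha> *\<^sub>R P (grad f x))"
  proof
    fix x
    have "bmd_step blk f phi \<alpha> s x = \<psi> x"
      unfolding bmd_step_def \<psi>_def P_def B_def G_def by simp
    also have "\<dots> = inv \<Phi> (\<Phi> x - \<alpha> *\<^sub>R P (grad f x))"
      by (rule inv_f_eq[OF injPhi key, symmetric])
    finally show "bmd_step blk f phi \<alpha> s x = (inv \<Phi> \<circ> (\<lambda>x. \<Phi> x - \<alpha> *\<^sub>R P (grad f x))) x"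
      by simp
  qed
  show ?thesis unfolding eq by (rule diffeo_comp[OF diffeo_inv[OF dPhi] dTheta])
qed

theorem proposition5:
  fixes f :: "real^'n \<Rightarrow> real"
    and blk :: "'n \<Rightarrow> nat"
    and p :: nat
    and phi :: "nat \<Rightarrow> real^'n \<Rightarrow> real"
    and mu :: "nat \<Rightarrow> real"
    and L \<alpha> :: real
  assumes blocks: "blk ` UNIV = {..<p}"
    and f_C2: "C2 f"
    and L_pos: "L > 0"
    and f_lip: "\<forall>x y. norm (grad f x - grad f y) \<le> L * norm (x - y)"
    and phi_block: "\<forall>s<p. \<forall>x. phi s x = phi s (blockproj blk s x)"
    and phi_C2: "\<forall>s<p. C2 (phi s)"
    and mu_pos: "\<forall>s<p. mu s > 0"
    and phi_sc: "\<forall>s<p. \<forall>x\<in>blockspace blk s. \<forall>y\<in>blockspace blk s.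
                   phi s y \<ge> phi s x + grad (phi s) x \<bullet> (y - x) + mu s / 2 * (norm (y - x))\<^sup>2"
    and alpha_pos: "0 < \<alpha>"
    and alpha_small: "\<alpha> < Min (mu ` {..<p}) / L"
  shows "diffeomorphism (bmd_comp blk f phi \<alpha> p)"
proof -
  have aM: "\<alpha> * L < Min (mu ` {..<p})"
    using alpha_small L_pos by (simp add: pos_less_divide_eq)
  have aL: "\<alpha> * L < mu s" if "s < p" for s
  proof -
    have "Min (mu ` {..<p}) \<le> mu s" using that by (intro Min_le) auto
    then show ?thesis using aM by linarith
  qed
  have "k \<le> p \<Longrightarrow> diffeomorphism (bmd_comp blk f phi \<alpha> k)" for k
  proof (induction k)
    case 0
    show ?case unfolding bmd_comp.simps by (rule diffeo_id)
  next
    case (Suc k)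
    then have k: "k < p" by simp
    have "diffeomorphism (bmd_step blk f phi \<alpha> k)"
      using step_diffeo[OF f_C2 f_lip _ _ _ _ alpha_pos aL[OF k]] phi_block phi_C2 mu_pos phi_sc k
      by blast
    moreover have "diffeomorphism (bmd_comp blk f phi \<alpha> k)" using Suc by simp
    ultimately show ?case unfolding bmd_comp.simps by (rule diffeo_comp)
  qed
  then show ?thesis by simp
qed
end
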